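(* Let $\mathcal{T}_3$ be the set of $s\in\mathcal{A}^*$ with $|s|\ne\mathsf{rmin}(s)+1$ such that $\mathrm{sebr}(s)=\mathrm{Rmin}(s)_{\mathsf{rpos}(s)+1}$, $\mathrm{Prm}(s)_{\mathsf{rpos}(s)+1}=\mathrm{Prm}(s)_{\mathsf{rpos}(s)}+1$, and no $\mathcal{M}$asc appears at a position after $\mathrm{Prm}(s)_{\mathsf{rpos}(s)}$. Let $\mathcal{P}_1$ be the set of $s\in\mathcal{A}^*$ with $s_{|s|-1}<s_{|s|}=\mathsf{asc}(s)$. For every $n$ there is a bijection $f_3:\mathcal{T}_3\cap\mathcal{A}_n\to\{s\in\mathcal{A}_n\cap\mathcal{P}_1:\mathsf{rpos}(s)\ne0\}$ such that for all $s$: $\mathsf{asc}(s)=\mathsf{asc}(f_3(s))$, $\mathsf{rep}(s)=\mathsf{rep}(f_3(s))+1$, $\mathsf{max}(s)=\mathsf{max}(f_3(s))$, $\mathsf{rmin}(s)=\mathsf{rmin}(f_3(s))-1$, $\mathsf{rpos}(s)=\mathsf{rpos}(f_3(s))-1$, $\mathsf{zero}(s)=\mathsf{zero}(f_3(s))+\chi(\mathsf{rpos}(s)=0)$ and $\mathsf{ealm}(s)=\mathsf{ealm}(f_3(s))-\chi(\mathrm{Prm}(s)_{\mathsf{rpos}(s)}=\mathsf{max}(s)+1)$.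
   Context: For a sequence $s$, $\mathsf{asc}(s)=|\{i:s_i<s_{i+1}\}|$. An ascent sequence is a sequence $s=(s_1,\dots,s_n)$ of non-negative integers with $s_1=0$, $s_i\le\mathsf{asc}(s_1,\dots,s_{i-1})+1$ for $i\ge2$; $\mathcal{A}_n$ is the set of those of length $n$, $|s|$ the length; $\mathcal{A}^*$ is the set of all ascent sequences except those of the form $(0,1,\dots,|s|-1)$. $\mathsf{rep}(s)=|s|-|\{s_i\}|$; $\mathsf{zero}(s)=|\{i:s_i=0\}|$; $\mathsf{max}(s)=|\{i:s_i=i-1\}|$; $\mathsf{ealm}(s)=s_{\mathsf{max}(s)+1}$ if $\mathsf{max}(s)\ne|s|$, else $0$. A right-to-left minimum is an entry $s_i$ with $s_i<s_j$ for all $j>i$; $\mathsf{rmin}(s)$ is their number; they are indexed $0,\dots,\mathsf{rmin}(s)-1$ from left to right, with values $\mathrm{Rmin}(s)_m$ and positions $\mathrm{Prm}(s)_m$. $\mathsf{rpos}(s)$: $0$ if $\mathsf{rmin}(s)=|s|$; otherwise the maximal $m$ such that the value $\mathrm{Rmin}(s)_m$ occurs at least twice after position $\mathrm{Prm}(s)_{m-1}$ (for $m=0$: at least twice in $s$), and $0$ if none. $\mathrm{sebr}(s)$ is the smallest entry strictly between the two rightmost occurrences of $\mathrm{Rmin}(s)_{\mathsf{rpos}(s)}$, and $0$ if they are adjacent. An entry $s_i$ is an $\mathcal{M}$asc if $s_i=\mathsf{asc}(s_1,\dots,s_{i-1})+1$. $\chi(P)=1$ if $P$ holds, else $0$. 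*)

theory Defs
  imports Main
begin

text \<open>Sequences are lists of naturals; positions are 1-indexed as in the paper:
  sq s i is the i-th entry s_i (1 <= i <= length s).\<close>

definition sq :: "nat list \<Rightarrow> nat \<Rightarrow> nat" where
  "sq s i = s ! (i - 1)"

definition asc :: "nat list \<Rightarrow> nat" where
  "asc s = card {i. Suc i < length s \<and> s ! i < s ! Suc i}"

definition is_ascent :: "nat list \<Rightarrow> bool" where
  "is_ascent s \<longleftrightarrow> s \<noteq> [] \<and> s ! 0 = 0 \<and>
     (\<forall>i. 0 < i \<and> i < length s \<longrightarrow> s ! i \<le> asc (take i s) + 1)"

definition Aseq :: "nat \<Rightarrow> nat list set" where
  "Aseq n = {s. is_ascent s \<and> length s = n}"

definition Astar :: "nat list set" where
  "Astar = {s. is_ascent s \<and> s \<noteq> [0..<length s]}"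

definition rep :: "nat list \<Rightarrow> nat" where
  "rep s = length s - card (set s)"

definition zero :: "nat list \<Rightarrow> nat" where
  "zero s = card {i. 1 \<le> i \<and> i \<le> length s \<and> sq s i = 0}"

definition amax :: "nat list \<Rightarrow> nat" where
  "amax s = card {i. 1 \<le> i \<and> i \<le> length s \<and> sq s i = i - 1}"

definition ealm :: "nat list \<Rightarrow> nat" where
  "ealm s = (if amax s \<noteq> length s then sq s (amax s + 1) else 0)"

definition rmin_positions :: "nat list \<Rightarrow> nat list" where
  "rmin_positions s = filter (\<lambda>i. \<forall>j. i < j \<and> j \<le> length s \<longrightarrow> sq s i < sq s j) [1..<length s + 1]"

definition rmin :: "nat list \<Rightarrow> nat" where
  "rmin s = length (rmin_positions s)"

definition Prm :: "nat list \<Rightarrow> nat \<Rightarrow> nat" where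
  "Prm s m = rmin_positions s ! m"

definition Rmin :: "nat list \<Rightarrow> nat \<Rightarrow> nat" where
  "Rmin s m = sq s (Prm s m)"

definition rpos :: "nat list \<Rightarrow> nat" where
  "rpos s = (if rmin s = length s then 0 else
     (let C = {m. m < rmin s \<and>
                 2 \<le> card {j. (if m = 0 then 0 else Prm s (m - 1)) < j \<and> j \<le> length s
                              \<and> sq s j = Rmin s m}}
      in if C = {} then 0 else Max C))"

text \<open>Smallest entry strictly between the two rightmost occurrences of Rmin(s)_rpos(s);
  0 if they are adjacent (or, by convention, if there is no second occurrence).\<close>
definition sebr :: "nat list \<Rightarrow> nat" where
  "sebr s = (let v = Rmin s (rpos s); p = Prm s (rpos s);
               Q = {j. 1 \<le> j \<and> j < p \<and> sq s j = v}
           in if Q = {} then 0 else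
              (let q = Max Q; E = {sq s j | j. q < j \<and> j < p}
               in if E = {} then 0 else Min E))"

definition is_Masc :: "nat list \<Rightarrow> nat \<Rightarrow> bool" where
  "is_Masc s i \<longleftrightarrow> sq s i = asc (take (i - 1) s) + 1"

definition T3 :: "nat list set" where
  "T3 = {s. s \<in> Astar \<and> length s \<noteq> rmin s + 1 \<and> rpos s + 1 < rmin s \<and>
            sebr s = Rmin s (rpos s + 1) \<and>
            Prm s (rpos s + 1) = Prm s (rpos s) + 1 \<and>
            (\<forall>i. Prm s (rpos s) < i \<and> i \<le> length s \<longrightarrow> \<not> is_Masc s i)}"

definition P1 :: "nat list set" where
  "P1 = {s. s \<in> Astar \<and> sq s (length s - 1) < sq s (length s) \<and> sq s (length s) = asc s}"

definition chi :: "bool \<Rightarrow> int" where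
  "chi P = (if P then 1 else 0)"

end

theory Submission
  imports Defs
begin

lemma asc_Nil[simp]: "asc [] = 0" by (simp add: asc_def)
lemma asc_single[simp]: "asc [a] = 0" by (simp add: asc_def)

lemma asc_Cons2: "asc (a # b # xs) = (if a < b then 1 else 0) + asc (b # xs)"
proof -
  have e: "{i. Suc i < length (a # b # xs) \<and> (a # b # xs) ! i < (a # b # xs) ! Suc i}
     = {i. i = 0 \<and> a < b} \<union> Suc ` {i. Suc i < length (b # xs) \<and> (b # xs) ! i < (b # xs) ! Suc i}"
    (is "?L = ?A \<union> ?B")
  proof (rule set_eqI)
    fix i show "i \<in> ?L \<longleftrightarrow> i \<in> ?A \<union> ?B"
      by (cases i) auto
  qed
  have fin: "finite ?B" by (rule finite_imageI) (rule finite_subset[of _ "{..<length (b#xs)}"], auto)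
  have "card (?A \<union> ?B) = card ?A + card ?B"
    by (rule card_Un_disjoint) auto
  moreover have "card ?A = (if a < b then 1 else 0)" by auto
  moreover have "card ?B = asc (b # xs)" unfolding asc_def by (rule card_image) simp
  ultimately show ?thesis using e by (simp add: asc_def)
qed

lemma asc_Cons_append: "ys \<noteq> [] \<Longrightarrow> asc (a # ys) = (if a < hd ys then 1 else 0) + asc ys"
  by (cases ys) (auto simp: asc_Cons2)

lemma asc_append: "asc (xs @ ys) = asc xs + asc ys + (if xs \<noteq> [] \<and> ys \<noteq> [] \<and> last xs < hd ys then 1 else 0)"
proof (induction xs)
  case Nil then show ?case by simp
next
  case (Cons a xs)
  show ?case
  proof (cases xs)
    case Nil
    then show ?thesis by (cases ys) (auto simp: asc_Cons2)
  next
    case (Cons b zs)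
    then have "asc ((a # xs) @ ys) = (if a < b then 1 else 0) + asc (xs @ ys)"
      by (simp add: asc_Cons2)
    moreover have "asc (a # xs) = (if a < b then 1 else 0) + asc xs" using Cons by (simp add: asc_Cons2)
    ultimately show ?thesis using Cons.IH Cons by auto
  qed
qed

lemma asc_snoc: "asc (xs @ [a]) = asc xs + (if xs \<noteq> [] \<and> last xs < a then 1 else 0)"
  by (simp add: asc_append)

lemma asc_take_mono: "i \<le> j \<Longrightarrow> asc (take i x) \<le> asc (take j x)"
proof -
  assume "i \<le> j"
  then have "take j x = take i x @ take (j - i) (drop i x)"
    by (metis le_add_diff_inverse take_add)
  then show ?thesis by (simp add: asc_append)
qed

lemma asc_le_length: "asc x \<le> length x - 1"
proof -
  have "{i. Suc i < length x \<and> x ! i < x ! Suc i} \<subseteq> {..<length x - 1}" by auto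
  then show ?thesis unfolding asc_def by (metis card_lessThan card_mono finite_lessThan)
qed

lemma asc_take_Suc: "Suc i \<le> length x \<Longrightarrow>
  asc (take (Suc i) x) = asc (take i x) + (if 0 < i \<and> x ! (i - 1) < x ! i then 1 else 0)"
proof -
  assume a: "Suc i \<le> length x"
  have "take (Suc i) x = take i x @ [x ! i]" using a by (simp add: take_Suc_conv_app_nth)
  moreover have "0 < i \<Longrightarrow> last (take i x) = x ! (i - 1)" using a
    by (cases i) (auto simp: take_Suc_conv_app_nth)
  ultimately show ?thesis by (auto simp: asc_snoc)
qed

lemma is_ascent_take:
  assumes "is_ascent x" "0 < i" "i \<le> length x"
  shows "is_ascent (take i x)"
  using assms unfolding is_ascent_def by (auto simp: min_def)

lemma ascent_prefix_bound:
  assumes "is_ascent x"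
  shows "i \<le> length x \<Longrightarrow> j < i \<Longrightarrow> x ! j \<le> asc (take i x)"
proof (induction i arbitrary: j)
  case 0 then show ?case by simp
next
  case (Suc i)
  have mono: "asc (take i x) \<le> asc (take (Suc i) x)" by (rule asc_take_mono) simp
  show ?case
  proof (cases "j < i")
    case True
    then show ?thesis using Suc mono by fastforce
  next
    case False
    then have j: "j = i" using Suc by simp
    show ?thesis
    proof (cases i)
      case 0
      then show ?thesis using assms j unfolding is_ascent_def by simp
    next
      case (Suc k)
      have le: "x ! i \<le> asc (take i x) + 1" using assms Suc \<open>Suc i \<le> length x\<close>
        unfolding is_ascent_def by auto
      have prev: "x ! k \<le> asc (take i x)" using Suc.IH[of k] \<open>Suc i \<le> length x\<close> Suc by simp
      have st: "asc (take (Suc i) x) = asc (take i x) + (if x ! k < x ! i then 1 else 0)"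
        using asc_take_Suc[of i x] \<open>Suc i \<le> length x\<close> Suc by simp
      show ?thesis using le prev st j by (cases "x ! k < x ! i") auto
    qed
  qed
qed

lemma ascent_bound:
  assumes "is_ascent x" "j < length x"
  shows "x ! j \<le> asc x"
  using ascent_prefix_bound[OF assms(1), of "length x" j] assms by simp

lemma asc_take_full:
  "asc (take i x) = i - 1 \<Longrightarrow> Suc j < i \<Longrightarrow> i \<le> length x \<Longrightarrow> x ! j < x ! Suc j"
proof -
  assume a: "asc (take i x) = i - 1" "Suc j < i" "i \<le> length x"
  let ?S = "{k. Suc k < length (take i x) \<and> take i x ! k < take i x ! Suc k}"
  have sub: "?S \<subseteq> {..<i - 1}" using a by auto
  have "card ?S = card {..<i - 1}" using a unfolding asc_def by simp
  then have "?S = {..<i - 1}" using sub by (intro card_subset_eq) auto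
  then have "j \<in> ?S" using a by auto
  then show ?thesis using a by simp
qed

lemma ascent_fixpoint:
  assumes "is_ascent x" "i < length x" "x ! i = i" "Suc j \<le> i"
  shows "x ! j < x ! Suc j"
proof -
  have le: "x ! i \<le> asc (take i x) + 1" using assms unfolding is_ascent_def
    by (cases i) auto
  have "asc (take i x) \<le> i - 1" using asc_le_length[of "take i x"] assms by simp
  then have full: "asc (take i x) = i - 1" using le assms by linarith
  show ?thesis
  proof (cases "Suc j < i")
    case True
    then show ?thesis using asc_take_full[OF full] assms by simp
  next
    case False
    then have ji: "Suc j = i" using assms by simp
    show ?thesis
    proof (cases j)
      case 0
      then show ?thesis using assms ji unfolding is_ascent_def by simp
    next
      case (Suc k)
      have "x ! j \<le> asc (take j x) + 1" using assms ji Suc unfolding is_ascent_def by auto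
      moreover have "asc (take j x) \<le> j - 1" using asc_le_length[of "take j x"] assms ji by simp
      ultimately show ?thesis using assms ji Suc by simp
    qed
  qed
qed

definition isR :: "nat list \<Rightarrow> nat \<Rightarrow> bool" where
  "isR x i \<longleftrightarrow> (\<forall>j. i < j \<and> j < length x \<longrightarrow> x ! i < x ! j)"

definition RL :: "nat list \<Rightarrow> nat list" where
  "RL x = filter (isR x) [0..<length x]"

definition DD :: "nat list \<Rightarrow> nat \<Rightarrow> bool" where
  "DD x i \<longleftrightarrow> (\<exists>j<i. x ! j = x ! i \<and> (\<forall>k. j \<le> k \<and> k < i \<longrightarrow> \<not> isR x k))"

lemma rmin_positions_RL: "rmin_positions x = map Suc (RL x)"
proof -
  have "[1..<length x + 1] = map Suc [0..<length x]" by (simp add: map_Suc_upt)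
  then have "rmin_positions x = map Suc (filter ((\<lambda>i. \<forall>j. i < j \<and> j \<le> length x \<longrightarrow> sq x i < sq x j) \<circ> Suc) [0..<length x])"
    unfolding rmin_positions_def by (simp add: filter_map)
  also have "filter ((\<lambda>i. \<forall>j. i < j \<and> j \<le> length x \<longrightarrow> sq x i < sq x j) \<circ> Suc) [0..<length x] = RL x"
    unfolding RL_def
  proof (rule filter_cong)
    fix i assume "i \<in> set [0..<length x]"
    show "((\<lambda>i. \<forall>j. i < j \<and> j \<le> length x \<longrightarrow> sq x i < sq x j) \<circ> Suc) i = isR x i"
      unfolding isR_def sq_def comp_def
    proof
      assume h: "\<forall>j. Suc i < j \<and> j \<le> length x \<longrightarrow> x ! (Suc i - 1) < x ! (j - 1)"
      show "\<forall>j. i < j \<and> j < length x \<longrightarrow> x ! i < x ! j"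
      proof (intro allI impI)
        fix j assume "i < j \<and> j < length x"
        then show "x ! i < x ! j" using h[rule_format, of "Suc j"] by simp
      qed
    next
      assume h: "\<forall>j. i < j \<and> j < length x \<longrightarrow> x ! i < x ! j"
      show "\<forall>j. Suc i < j \<and> j \<le> length x \<longrightarrow> x ! (Suc i - 1) < x ! (j - 1)"
      proof (intro allI impI)
        fix j assume a: "Suc i < j \<and> j \<le> length x"
        then have "i < j - 1 \<and> j - 1 < length x" by linarith
        then show "x ! (Suc i - 1) < x ! (j - 1)" using h[rule_format, of "j - 1"] by simp
      qed
    qed
  qed simp
  finally show ?thesis .
qed

lemma rmin_RL: "rmin x = length (RL x)"
  by (simp add: rmin_def rmin_positions_RL)

lemma Prm_RL: "m < length (RL x) \<Longrightarrow> Prm x m = Suc (RL x ! m)"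
  by (simp add: Prm_def rmin_positions_RL)

lemma Rmin_RL: "m < length (RL x) \<Longrightarrow> Rmin x m = x ! (RL x ! m)"
  by (simp add: Rmin_def Prm_RL sq_def)

lemma RL_sorted: "sorted_wrt (<) (RL x)"
  unfolding RL_def by (rule sorted_wrt_filter) simp

lemma RL_distinct: "distinct (RL x)"
  unfolding RL_def by simp

lemma set_RL: "set (RL x) = {i. i < length x \<and> isR x i}"
  unfolding RL_def by auto

lemma RL_less_iff: "i < length (RL x) \<Longrightarrow> j < length (RL x) \<Longrightarrow> RL x ! i < RL x ! j \<longleftrightarrow> i < j"
  using RL_sorted[of x]
  by (metis linorder_neqE_nat not_less_iff_gr_or_eq sorted_wrt_nth_less)

lemma RL_nth: "m < length (RL x) \<Longrightarrow> RL x ! m < length x \<and> isR x (RL x ! m)"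
  using set_RL[of x] nth_mem[of m "RL x"] by auto

lemma RL_memE:
  assumes "isR x k" "k < length x"
  obtains i where "i < length (RL x)" "RL x ! i = k"
  using assms set_RL[of x] by (metis (mono_tags, lifting) in_set_conv_nth mem_Collect_eq)

lemma RL_between:
  assumes "m < length (RL x)" "isR x k" "k < RL x ! m"
  shows "0 < m \<and> k \<le> RL x ! (m - 1)"
proof -
  have "k < length x" using RL_nth[OF assms(1)] assms by simp
  then obtain i where i: "i < length (RL x)" "RL x ! i = k" using assms RL_memE by blast
  then have "i < m" using RL_less_iff[OF i(1) assms(1)] assms by simp
  then have "RL x ! i \<le> RL x ! (m - 1)"
  proof (cases "i = m - 1")
    case False
    then have "i < m - 1" using \<open>i < m\<close> by simp
    moreover have "m - 1 < length (RL x)" using assms by simp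
    ultimately show ?thesis using RL_less_iff[of i x "m - 1"] i by simp
  qed simp
  then show ?thesis using \<open>i < m\<close> i by simp
qed

lemma card_ge2_iff:
  assumes "finite S" "a \<in> S"
  shows "2 \<le> card S \<longleftrightarrow> (\<exists>b\<in>S. b \<noteq> a)"
proof -
  have "2 \<le> card S \<longleftrightarrow> \<not> card S \<le> Suc 0" by linarith
  also have "\<dots> \<longleftrightarrow> \<not> (\<forall>x\<in>S. \<forall>y\<in>S. x = y)" using card_le_Suc0_iff_eq[OF assms(1)] by simp
  also have "\<dots> \<longleftrightarrow> (\<exists>b\<in>S. b \<noteq> a)" using assms(2) by metis
  finally show ?thesis .
qed

lemma C_iff:
  assumes m: "m < length (RL x)"
  shows "2 \<le> card {j. (if m = 0 then 0 else Prm x (m - 1)) < j \<and> j \<le> length x \<and> sq x j = Rmin x m}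
         \<longleftrightarrow> DD x (RL x ! m)"
proof -
  define lo where "lo = (if m = 0 then 0 else Prm x (m - 1))"
  define S where "S = {j. lo < j \<and> j \<le> length x \<and> sq x j = Rmin x m}"
  define p where "p = RL x ! m"
  have p: "p < length x" "isR x p" using RL_nth[OF m] p_def by auto
  have lo_lt: "lo < Suc p"
  proof (cases "m = 0")
    case True then show ?thesis by (simp add: lo_def)
  next
    case False
    then have "RL x ! (m - 1) < p" using RL_less_iff[of "m - 1" x m] m p_def by simp
    then show ?thesis using False m by (simp add: lo_def Prm_RL)
  qed
  have fin: "finite S" unfolding S_def by (rule finite_subset[of _ "{..length x}"]) auto
  have pS: "Suc p \<in> S" unfolding S_def using p lo_lt m by (simp add: sq_def Rmin_RL p_def)
  have "2 \<le> card S \<longleftrightarrow> (\<exists>b\<in>S. b \<noteq> Suc p)" by (rule card_ge2_iff[OF fin pS])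
  also have "\<dots> \<longleftrightarrow> DD x p"
  proof
    assume "\<exists>b\<in>S. b \<noteq> Suc p"
    then obtain b where b: "b \<in> S" "b \<noteq> Suc p" by blast
    then have b1: "lo < b" "b \<le> length x" "x ! (b - 1) = x ! p"
      unfolding S_def using m by (auto simp: sq_def Rmin_RL p_def)
    have "b - 1 < p"
    proof (rule ccontr)
      assume "\<not> b - 1 < p"
      then have "p < b - 1" using b(2) b1 by auto
      then have "x ! p < x ! (b - 1)" using p(2) b1 unfolding isR_def by auto
      then show False using b1 by simp
    qed
    moreover have "\<forall>k. b - 1 \<le> k \<and> k < p \<longrightarrow> \<not> isR x k"
    proof (intro allI impI)
      fix k assume k: "b - 1 \<le> k \<and> k < p"
      show "\<not> isR x k"
      proof
        assume "isR x k"
        then have "0 < m \<and> k \<le> RL x ! (m - 1)" using RL_between[OF m] k p_def by auto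
        then have "Suc k \<le> lo" using m by (simp add: lo_def Prm_RL)
        then show False using k b1 by linarith
      qed
    qed
    ultimately show "DD x p" unfolding DD_def using b1 by blast
  next
    assume "DD x p"
    then obtain j where j: "j < p" "x ! j = x ! p" "\<forall>k. j \<le> k \<and> k < p \<longrightarrow> \<not> isR x k"
      unfolding DD_def by blast
    have "lo < Suc j"
    proof (cases "m = 0")
      case True then show ?thesis by (simp add: lo_def)
    next
      case False
      have "RL x ! (m - 1) < p" using RL_less_iff[of "m - 1" x m] m p_def False by simp
      moreover have "isR x (RL x ! (m - 1))" using RL_nth[of "m - 1" x] m by simp
      ultimately have "\<not> (j \<le> RL x ! (m - 1))" using j(3) by blast
      then show ?thesis using False m by (simp add: lo_def Prm_RL)
    qed
    then have "Suc j \<in> S" unfolding S_def using j p m by (simp add: sq_def Rmin_RL p_def)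
    then show "\<exists>b\<in>S. b \<noteq> Suc p" using j by auto
  qed
  finally show ?thesis unfolding S_def lo_def p_def .
qed

lemma rpos_C:
  assumes "rmin x \<noteq> length x"
  shows "rpos x = (if {m. m < length (RL x) \<and> DD x (RL x ! m)} = {} then 0
                   else Max {m. m < length (RL x) \<and> DD x (RL x ! m)})"
proof -
  have eq: "{m. m < rmin x \<and> 2 \<le> card {j. (if m = 0 then 0 else Prm x (m - 1)) < j \<and> j \<le> length x \<and> sq x j = Rmin x m}}
      = {m. m < length (RL x) \<and> DD x (RL x ! m)}"
    by (rule Collect_cong) (metis C_iff rmin_RL)
  show ?thesis unfolding rpos_def Let_def eq by (rule if_not_P[OF assms])
qed

lemma rpos_eqI:
  assumes "rmin x \<noteq> length x" "m < length (RL x)" "DD x (RL x ! m)"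
    "\<And>m'. m < m' \<Longrightarrow> m' < length (RL x) \<Longrightarrow> \<not> DD x (RL x ! m')"
  shows "rpos x = m"
proof -
  let ?C = "{m. m < length (RL x) \<and> DD x (RL x ! m)}"
  have "m \<in> ?C" using assms by simp
  moreover have "finite ?C" by simp
  moreover have "\<forall>m'\<in>?C. m' \<le> m"
  proof
    fix m' assume "m' \<in> ?C"
    then show "m' \<le> m" using assms(4)[of m'] by (cases "m < m'") auto
  qed
  ultimately have "Max ?C = m" by (intro Max_eqI) blast+
  then show ?thesis using rpos_C[OF assms(1)] \<open>m \<in> ?C\<close> by auto
qed

lemma rpos_above:
  assumes "rmin x \<noteq> length x" "rpos x < m'" "m' < length (RL x)"
  shows "\<not> DD x (RL x ! m')"
proof
  assume d: "DD x (RL x ! m')"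
  let ?C = "{m. m < length (RL x) \<and> DD x (RL x ! m)}"
  have "m' \<in> ?C" using assms d by simp
  then have le: "m' \<le> Max ?C" by (intro Max_ge) auto
  have ne: "?C \<noteq> {}" using \<open>m' \<in> ?C\<close> by blast
  have "rpos x = Max ?C" using rpos_C[OF assms(1)] if_not_P[OF ne] by metis
  then show False using le assms(2) by simp
qed

lemma rpos_mem:
  assumes "rpos x \<noteq> 0"
  shows "rmin x \<noteq> length x \<and> rpos x < length (RL x) \<and> DD x (RL x ! rpos x)"
proof -
  have r: "rmin x \<noteq> length x" using assms unfolding rpos_def by auto
  let ?C = "{m. m < length (RL x) \<and> DD x (RL x ! m)}"
  have ne: "?C \<noteq> {}"
  proof
    assume e: "?C = {}"
    have "rpos x = 0" using rpos_C[OF r] if_P[OF e] by metis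
    then show False using assms by simp
  qed
  have "rpos x = Max ?C" using rpos_C[OF r] if_not_P[OF ne] by metis
  moreover have "Max ?C \<in> ?C" using ne by (intro Max_in) auto
  ultimately show ?thesis using r by simp
qed


lemma upt_split: "i \<le> j \<Longrightarrow> j \<le> k \<Longrightarrow> [i..<k] = [i..<j] @ [j..<k]"
  by (metis le_add_diff_inverse upt_add_eq_append)

locale core0 =
  fixes t :: "nat list" and q P :: nat
  assumes H1: "q < P" "P < length t"
    and H2: "isR t q" and H3: "isR t P"
    and H4: "\<And>j. q < j \<Longrightarrow> j < P \<Longrightarrow> t ! P \<le> t ! j"
    and H5: "\<exists>j. q < j \<and> j < P \<and> t ! j = t ! P"
begin

definition "s = take P t @ t ! q # drop P t"
definition "A = filter (isR t) [0..<q]"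
definition "B = filter (isR t) [P..<length t]"
definition "B' = filter (isR t) [Suc P..<length t]"

lemma vw: "t ! q < t ! P" using H1 H2 unfolding isR_def by auto

lemma qP: "Suc q < P" using H5 by auto

lemma pm1: "t ! P \<le> t ! (P - 1)" "t ! q < t ! (P - 1)"
proof -
  show "t ! P \<le> t ! (P - 1)" using H4[of "P - 1"] qP by simp
  then show "t ! q < t ! (P - 1)" using vw by simp
qed

lemma len_s: "length s = Suc (length t)" using H1 by (simp add: s_def)

lemma s_lt: "i < P \<Longrightarrow> s ! i = t ! i" using H1 by (simp add: s_def nth_append)
lemma s_P: "s ! P = t ! q" using H1 by (simp add: s_def nth_append)
lemma s_gt: "P < i \<Longrightarrow> s ! i = t ! (i - 1)"
proof -
  assume a: "P < i"
  have "s ! i = (t ! q # drop P t) ! (i - P)" using H1 a by (simp add: s_def nth_append)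
  also have "\<dots> = drop P t ! (i - P - 1)" using a by (simp add: nth_Cons')
  also have "\<dots> = t ! (i - 1)" using H1 a by (cases "i - P - 1 < length t - P") (auto simp: nth_drop)
  finally show ?thesis .
qed
lemma s_Suc: "P \<le> k \<Longrightarrow> s ! Suc k = t ! k" using s_gt[of "Suc k"] by simp

lemma isR_t_mid: "q < k \<Longrightarrow> k < P \<Longrightarrow> \<not> isR t k"
  using H4[of k] H1 unfolding isR_def by force

lemma isR_s_lt: "k < q \<Longrightarrow> isR s k \<longleftrightarrow> isR t k"
proof
  assume k: "k < q" and r: "isR s k"
  show "isR t k" unfolding isR_def
  proof (intro allI impI)
    fix j assume j: "k < j \<and> j < length t"
    show "t ! k < t ! j"
    proof (cases "j < P")
      case True
      have "s ! k < s ! j" using r j len_s unfolding isR_def by simp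
      then show ?thesis using s_lt[of k] s_lt[of j] True k H1 by simp
    next
      case False
      then have "s ! Suc j = t ! j" using s_Suc by simp
      moreover have "s ! k < s ! Suc j" using r j k len_s unfolding isR_def by simp
      ultimately show ?thesis using s_lt[of k] k H1 by simp
    qed
  qed
next
  assume k: "k < q" and r: "isR t k"
  show "isR s k" unfolding isR_def
  proof (intro allI impI)
    fix j assume j: "k < j \<and> j < length s"
    have sk: "s ! k = t ! k" using s_lt[of k] k H1 by simp
    show "s ! k < s ! j"
    proof (cases "j < P")
      case True
      then show ?thesis using r j sk s_lt[of j] H1 unfolding isR_def by simp
    next
      case False
      show ?thesis
      proof (cases "j = P")
        case True
        then show ?thesis using r k sk s_P H1 unfolding isR_def by simp
      next
        case False
        then have "P < j" using \<open>\<not> j < P\<close> by simp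
        then have "k < j - 1 \<and> j - 1 < length t" using j len_s H1 k by linarith
        then show ?thesis using r sk s_gt[of j] \<open>P < j\<close> unfolding isR_def by simp
      qed
    qed
  qed
qed

lemma isR_s_q: "\<not> isR s q"
  using s_P s_lt[of q] H1 len_s unfolding isR_def by force

lemma isR_s_mid: "q < k \<Longrightarrow> k < P \<Longrightarrow> \<not> isR s k"
proof
  assume k: "q < k" "k < P" and r: "isR s k"
  have "s ! k < s ! Suc P" using r k H1 len_s unfolding isR_def by simp
  then show False using s_Suc[of P] s_lt[of k] k H4[of k] by simp
qed

lemma isR_s_P: "isR s P"
  unfolding isR_def
proof (intro allI impI)
  fix j assume j: "P < j \<and> j < length s"
  then have sj: "s ! j = t ! (j - 1)" using s_gt by simp
  show "s ! P < s ! j"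
  proof (cases "j - 1 = P")
    case True then show ?thesis using sj s_P vw by simp
  next
    case False
    have "P < j - 1 \<and> j - 1 < length t" using j False len_s by linarith
    then have "t ! P < t ! (j - 1)" using H3 unfolding isR_def by simp
    then show ?thesis using sj s_P vw by simp
  qed
qed

lemma isR_s_gt: "P \<le> k \<Longrightarrow> isR s (Suc k) \<longleftrightarrow> isR t k"
proof -
  assume k: "P \<le> k"
  have "isR s (Suc k) \<longleftrightarrow> (\<forall>j. Suc k < j \<and> j < length s \<longrightarrow> t ! k < t ! (j - 1))"
    unfolding isR_def using s_Suc[OF k] s_gt k by auto
  also have "\<dots> \<longleftrightarrow> (\<forall>j. k < j \<and> j < length t \<longrightarrow> t ! k < t ! j)"
  proof
    assume h: "\<forall>j. Suc k < j \<and> j < length s \<longrightarrow> t ! k < t ! (j - 1)"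
    show "\<forall>j. k < j \<and> j < length t \<longrightarrow> t ! k < t ! j"
    proof (intro allI impI)
      fix j assume "k < j \<and> j < length t"
      then show "t ! k < t ! j" using h[rule_format, of "Suc j"] len_s by simp
    qed
  next
    assume h: "\<forall>j. k < j \<and> j < length t \<longrightarrow> t ! k < t ! j"
    show "\<forall>j. Suc k < j \<and> j < length s \<longrightarrow> t ! k < t ! (j - 1)"
    proof (intro allI impI)
      fix j assume a: "Suc k < j \<and> j < length s"
      then have "k < j - 1 \<and> j - 1 < length t" using len_s by linarith
      then show "t ! k < t ! (j - 1)" using h by simp
    qed
  qed
  finally show ?thesis unfolding isR_def .
qed

lemma RL_t: "RL t = A @ [q] @ B"
proof -
  have "[0..<length t] = [0..<q] @ [q..<P] @ [P..<length t]"
    using H1 upt_split[of 0 q "length t"] upt_split[of q P "length t"] by simp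
  moreover have "[q..<P] = q # [Suc q..<P]" using H1 by (simp add: upt_conv_Cons)
  moreover have "filter (isR t) [Suc q..<P] = []"
    using isR_t_mid by (auto simp: filter_empty_conv)
  ultimately show ?thesis unfolding RL_def A_def B_def using H2 by simp
qed

lemma B_Cons: "B = P # B'"
  unfolding B_def B'_def using H1 H3 by (simp add: upt_conv_Cons)

lemma set_B': "b \<in> set B' \<longleftrightarrow> P < b \<and> b < length t \<and> isR t b"
  unfolding B'_def by auto

lemma RL_s: "RL s = A @ [P] @ map Suc B"
proof -
  have "[0..<length s] = [0..<q] @ [q..<P] @ [P] @ [Suc P..<Suc (length t)]"
    using H1 len_s upt_split[of 0 q "Suc (length t)"] upt_split[of q P "Suc (length t)"]
      upt_conv_Cons[of P "Suc (length t)"] by simp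
  moreover have "filter (isR s) [0..<q] = A" unfolding A_def
    by (rule filter_cong) (auto simp: isR_s_lt)
  moreover have "filter (isR s) [q..<P] = []"
  proof -
    have "\<forall>k\<in>set [q..<P]. \<not> isR s k" using isR_s_q isR_s_mid
      by (metis atLeastLessThan_iff le_neq_implies_less set_upt)
    then show ?thesis by (simp add: filter_empty_conv)
  qed
  moreover have "filter (isR s) [Suc P..<Suc (length t)] = map Suc B"
  proof -
    have "[Suc P..<Suc (length t)] = map Suc [P..<length t]" by (simp add: map_Suc_upt)
    then have "filter (isR s) [Suc P..<Suc (length t)] = map Suc (filter (isR s \<circ> Suc) [P..<length t])"
      by (simp add: filter_map)
    also have "filter (isR s \<circ> Suc) [P..<length t] = B" unfolding B_def
      by (rule filter_cong) (auto simp: isR_s_gt)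
    finally show ?thesis .
  qed
  ultimately show ?thesis unfolding RL_def using isR_s_P by simp
qed

definition "r = length A"

lemma RL_s_r: "RL s ! r = P" by (simp add: RL_s r_def nth_append)
lemma RL_s_r1: "RL s ! Suc r = Suc P" by (simp add: RL_s r_def nth_append B_Cons)
lemma RL_t_r: "RL t ! r = q" by (simp add: RL_t r_def nth_append)
lemma RL_t_r1: "RL t ! Suc r = P" by (simp add: RL_t r_def nth_append B_Cons)
lemma len_RL_s: "length (RL s) = Suc (Suc (r + length B'))" by (simp add: RL_s r_def B_Cons)
lemma len_RL_t: "length (RL t) = Suc (Suc (r + length B'))" by (simp add: RL_t r_def B_Cons)

lemma RL_s_gt: "Suc r < m \<Longrightarrow> m < length (RL s) \<Longrightarrow> RL s ! m = Suc (B' ! (m - Suc (Suc r))) \<and> m - Suc (Suc r) < length B'"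
  by (simp add: RL_s r_def nth_append B_Cons len_RL_s)
lemma RL_t_gt: "Suc r < m \<Longrightarrow> m < length (RL t) \<Longrightarrow> RL t ! m = B' ! (m - Suc (Suc r)) \<and> m - Suc (Suc r) < length B'"
  by (simp add: RL_t r_def nth_append B_Cons len_RL_t)

lemma DD_s_lt: "a < q \<Longrightarrow> DD s a \<longleftrightarrow> DD t a"
proof -
  assume a: "a < q"
  have e1: "\<And>j. j \<le> a \<Longrightarrow> s ! j = t ! j" using s_lt a H1 by simp
  have e2: "\<And>k. k < a \<Longrightarrow> isR s k \<longleftrightarrow> isR t k" using isR_s_lt a by simp
  show ?thesis unfolding DD_def
  proof
    assume "\<exists>j<a. s ! j = s ! a \<and> (\<forall>k. j \<le> k \<and> k < a \<longrightarrow> \<not> isR s k)"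
    then obtain j where "j < a" "s ! j = s ! a" "\<forall>k. j \<le> k \<and> k < a \<longrightarrow> \<not> isR s k" by blast
    then show "\<exists>j<a. t ! j = t ! a \<and> (\<forall>k. j \<le> k \<and> k < a \<longrightarrow> \<not> isR t k)"
      using e1 e2 by (intro exI[of _ j]) auto
  next
    assume "\<exists>j<a. t ! j = t ! a \<and> (\<forall>k. j \<le> k \<and> k < a \<longrightarrow> \<not> isR t k)"
    then obtain j where "j < a" "t ! j = t ! a" "\<forall>k. j \<le> k \<and> k < a \<longrightarrow> \<not> isR t k" by blast
    then show "\<exists>j<a. s ! j = s ! a \<and> (\<forall>k. j \<le> k \<and> k < a \<longrightarrow> \<not> isR s k)"
      using e1 e2 by (intro exI[of _ j]) auto
  qed
qed

lemma DD_s_P: "DD s P"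
  unfolding DD_def
proof (intro exI conjI allI impI)
  show "q < P" using H1 by simp
  show "s ! q = s ! P" using s_P s_lt H1 by simp
  fix k assume "q \<le> k \<and> k < P"
  then show "\<not> isR s k" using isR_s_q isR_s_mid by (cases "k = q") auto
qed

lemma DD_s_SucP: "\<not> DD s (Suc P)"
proof
  assume "DD s (Suc P)"
  then obtain j where j: "j < Suc P" "s ! j = s ! Suc P" "\<forall>k. j \<le> k \<and> k < Suc P \<longrightarrow> \<not> isR s k"
    unfolding DD_def by blast
  then show False using isR_s_P by simp
qed

lemma DD_s_gt: "P < b \<Longrightarrow> b < length t \<Longrightarrow> DD s (Suc b) \<longleftrightarrow> DD t b"
proof
  assume b: "P < b" "b < length t" and d: "DD s (Suc b)"
  then obtain j where j: "j < Suc b" "s ! j = s ! Suc b" "\<forall>k. j \<le> k \<and> k < Suc b \<longrightarrow> \<not> isR s k"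
    unfolding DD_def by blast
  have "P < j"
  proof (rule ccontr)
    assume "\<not> P < j"
    then have "j \<le> P \<and> P < Suc b" using b by simp
    then show False using j(3) isR_s_P by blast
  qed
  define j' where "j' = j - 1"
  have j': "j = Suc j'" "P \<le> j'" using \<open>P < j\<close> by (auto simp: j'_def)
  show "DD t b" unfolding DD_def
  proof (intro exI conjI allI impI)
    show "j' < b" using j j' by simp
    show "t ! j' = t ! b" using j j' s_Suc b by simp
    fix k assume "j' \<le> k \<and> k < b"
    then show "\<not> isR t k" using j(3)[rule_format, of "Suc k"] j' isR_s_gt by simp
  qed
next
  assume b: "P < b" "b < length t" and d: "DD t b"
  then obtain j where j: "j < b" "t ! j = t ! b" "\<forall>k. j \<le> k \<and> k < b \<longrightarrow> \<not> isR t k"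
    unfolding DD_def by blast
  have "P < j"
  proof (rule ccontr)
    assume "\<not> P < j"
    then have "j \<le> P \<and> P < b" using b by simp
    then show False using j(3) H3 by blast
  qed
  show "DD s (Suc b)" unfolding DD_def
  proof (intro exI conjI allI impI)
    show "Suc j < Suc b" using j by simp
    show "s ! Suc j = s ! Suc b" using j s_Suc b \<open>P < j\<close> by simp
    fix k assume k: "Suc j \<le> k \<and> k < Suc b"
    then obtain k' where "k = Suc k'" by (cases k) auto
    then show "\<not> isR s k" using j(3) k isR_s_gt \<open>P < j\<close> by simp
  qed
qed

lemma not_all_R_s: "rmin s \<noteq> length s"
proof -
  have "q \<in> set [0..<length s]" using H1 len_s by simp
  then have "length (filter (isR s) [0..<length s]) < length [0..<length s]"
    using isR_s_q by (intro length_filter_less) auto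
  then have "length (RL s) < length s" unfolding RL_def by simp
  then show ?thesis by (simp add: rmin_RL)
qed

end


locale ext =
  fixes t :: "nat list"
  assumes H0: "is_ascent t"
begin

definition "y = t @ [asc t + 1]"

lemma t_bound: "j < length t \<Longrightarrow> t ! j \<le> asc t" using ascent_bound[OF H0] by simp

lemma len_y: "length y = Suc (length t)" by (simp add: y_def)
lemma y_lt: "k < length t \<Longrightarrow> y ! k = t ! k" by (simp add: y_def nth_append)
lemma y_last: "y ! length t = asc t + 1" by (simp add: y_def nth_append)

lemma isR_y: "k < length t \<Longrightarrow> isR y k \<longleftrightarrow> isR t k"
proof -
  assume k: "k < length t"
  have "isR y k \<longleftrightarrow> (\<forall>j. k < j \<and> j < length t \<longrightarrow> t ! k < t ! j) \<and> t ! k < asc t + 1"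
    unfolding isR_def len_y
  proof (intro iffI conjI allI impI)
    fix j assume h: "\<forall>j. k < j \<and> j < Suc (length t) \<longrightarrow> y ! k < y ! j" and j: "k < j \<and> j < length t"
    then show "t ! k < t ! j" using h[rule_format, of j] y_lt k by simp
  next
    assume h: "\<forall>j. k < j \<and> j < Suc (length t) \<longrightarrow> y ! k < y ! j"
    then show "t ! k < asc t + 1" using h[rule_format, of "length t"] y_lt y_last k by simp
  next
    fix j assume h: "(\<forall>j. k < j \<and> j < length t \<longrightarrow> t ! k < t ! j) \<and> t ! k < asc t + 1"
      and j: "k < j \<and> j < Suc (length t)"
    show "y ! k < y ! j"
    proof (cases "j = length t")
      case True then show ?thesis using h y_lt y_last k by simp
    next
      case False then show ?thesis using h j y_lt k by simp
    qed
  qed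
  also have "\<dots> \<longleftrightarrow> isR t k" using t_bound[OF k] unfolding isR_def by simp
  finally show ?thesis .
qed

lemma isR_y_last: "isR y (length t)" unfolding isR_def len_y by simp

lemma RL_y: "RL y = RL t @ [length t]"
proof -
  have "[0..<length y] = [0..<length t] @ [length t]" by (simp add: len_y)
  moreover have "filter (isR y) [0..<length t] = RL t" unfolding RL_def
    by (rule filter_cong) (auto simp: isR_y)
  ultimately show ?thesis unfolding RL_def using isR_y_last by simp
qed

lemma DD_y_lt: "a < length t \<Longrightarrow> DD y a \<longleftrightarrow> DD t a"
proof -
  assume a: "a < length t"
  have e1: "\<And>j. j \<le> a \<Longrightarrow> y ! j = t ! j" using y_lt a by simp
  have e2: "\<And>k. k < a \<Longrightarrow> isR y k \<longleftrightarrow> isR t k" using isR_y a by simp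
  show ?thesis unfolding DD_def
  proof
    assume "\<exists>j<a. y ! j = y ! a \<and> (\<forall>k. j \<le> k \<and> k < a \<longrightarrow> \<not> isR y k)"
    then obtain j where "j < a" "y ! j = y ! a" "\<forall>k. j \<le> k \<and> k < a \<longrightarrow> \<not> isR y k" by blast
    then show "\<exists>j<a. t ! j = t ! a \<and> (\<forall>k. j \<le> k \<and> k < a \<longrightarrow> \<not> isR t k)"
      using e1 e2 by (intro exI[of _ j]) auto
  next
    assume "\<exists>j<a. t ! j = t ! a \<and> (\<forall>k. j \<le> k \<and> k < a \<longrightarrow> \<not> isR t k)"
    then obtain j where "j < a" "t ! j = t ! a" "\<forall>k. j \<le> k \<and> k < a \<longrightarrow> \<not> isR t k" by blast
    then show "\<exists>j<a. y ! j = y ! a \<and> (\<forall>k. j \<le> k \<and> k < a \<longrightarrow> \<not> isR y k)"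
      using e1 e2 by (intro exI[of _ j]) auto
  qed
qed

lemma DD_y_last: "\<not> DD y (length t)"
proof
  assume "DD y (length t)"
  then obtain j where j: "j < length t" "y ! j = y ! length t" unfolding DD_def by blast
  then show False using y_lt y_last t_bound[of j] by simp
qed

end

locale core = core0 t q P + ext t for t q P +
  assumes H6: "\<And>b. isR t b \<Longrightarrow> P < b \<Longrightarrow> b < length t \<Longrightarrow> \<not> DD t b"
begin

lemma DD_t_P: "DD t P"
proof -
  obtain j where j: "q < j" "j < P" "t ! j = t ! P" using H5 by blast
  show ?thesis unfolding DD_def
    using j isR_t_mid by (intro exI[of _ j]) auto
qed

lemma DD_y_P: "DD y P" using DD_t_P DD_y_lt H1 by simp

lemma B'_nth: "i < length B' \<Longrightarrow> P < B' ! i \<and> B' ! i < length t \<and> isR t (B' ! i)"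
  using set_B' nth_mem by blast

lemma rpos_s: "rpos s = r"
proof (rule rpos_eqI[OF not_all_R_s])
  show "r < length (RL s)" using len_RL_s by simp
  show "DD s (RL s ! r)" using RL_s_r DD_s_P by simp
  fix m' assume m': "r < m'" "m' < length (RL s)"
  show "\<not> DD s (RL s ! m')"
  proof (cases "m' = Suc r")
    case True then show ?thesis using RL_s_r1 DD_s_SucP by simp
  next
    case False
    then have "Suc r < m'" using m' by simp
    then obtain i where i: "RL s ! m' = Suc (B' ! i)" "i < length B'" using RL_s_gt m' by blast
    then show ?thesis using B'_nth[OF i(2)] H6 DD_s_gt by simp
  qed
qed

lemma not_all_R_y: "rmin y \<noteq> length y"
proof -
  obtain j where j: "q < j" "j < P" "t ! j = t ! P" using H5 by blast
  have nj: "\<not> isR y j" using isR_y isR_t_mid j H1 by simp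
  have "j \<in> set [0..<length y]" using j H1 len_y by simp
  then have "length (filter (isR y) [0..<length y]) < length [0..<length y]"
    using nj by (intro length_filter_less) auto
  then have "length (RL y) < length y" unfolding RL_def by simp
  then show ?thesis by (simp add: rmin_RL)
qed

lemma len_RL_y: "length (RL y) = Suc (Suc (Suc (r + length B')))"
  by (simp add: RL_y len_RL_t)

lemma RL_y_lt: "m < length (RL t) \<Longrightarrow> RL y ! m = RL t ! m" by (simp add: RL_y nth_append)

lemma rpos_y: "rpos y = Suc r"
proof (rule rpos_eqI[OF not_all_R_y])
  show "Suc r < length (RL y)" using len_RL_y by simp
  show "DD y (RL y ! Suc r)" using RL_y_lt[of "Suc r"] len_RL_t RL_t_r1 DD_y_P by simp
  fix m' assume m': "Suc r < m'" "m' < length (RL y)"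
  show "\<not> DD y (RL y ! m')"
  proof (cases "m' < length (RL t)")
    case True
    then obtain i where i: "RL t ! m' = B' ! i" "i < length B'" using RL_t_gt m' by blast
    then show ?thesis using B'_nth[OF i(2)] H6 DD_y_lt RL_y_lt True by simp
  next
    case False
    then have "m' = length (RL t)" using m' len_RL_y len_RL_t by simp
    then show ?thesis using DD_y_last by (simp add: RL_y nth_append)
  qed
qed

lemma rmin_s: "rmin s = Suc (Suc (r + length B'))" by (simp add: rmin_RL len_RL_s)
lemma rmin_y: "rmin y = Suc (rmin s)" by (simp add: rmin_RL len_RL_y len_RL_s)
lemma Prm_s_r: "Prm s r = Suc P" using Prm_RL[of r s] len_RL_s RL_s_r by simp
lemma Prm_s_r1: "Prm s (Suc r) = Suc (Suc P)" using Prm_RL[of "Suc r" s] len_RL_s RL_s_r1 by simp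
lemma Prm_y_r: "Prm y r = Suc q" using Prm_RL[of r y] len_RL_y RL_y_lt[of r] len_RL_t RL_t_r by simp
lemma Prm_y_r1: "Prm y (Suc r) = Suc P" using Prm_RL[of "Suc r" y] len_RL_y RL_y_lt[of "Suc r"] len_RL_t RL_t_r1 by simp

end


lemma ins_asc:
  assumes "a \<noteq> []" "c \<noteq> []" "v < hd c" "hd c \<le> last a"
  shows "asc (a @ v # c) = asc (a @ c) + 1"
proof -
  have "asc (a @ v # c) = asc a + asc (v # c) + (if last a < v then 1 else 0)"
    using asc_append[of a "v # c"] assms by simp
  moreover have "asc (v # c) = 1 + asc c" using asc_Cons_append[of c v] assms by simp
  moreover have "asc (a @ c) = asc a + asc c" using asc_append[of a c] assms by simp
  ultimately show ?thesis using assms by simp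
qed

lemma amax_eq: "amax x = card {i. i < length x \<and> x ! i = i}"
proof -
  have "{i. 1 \<le> i \<and> i \<le> length x \<and> sq x i = i - 1} = Suc ` {i. i < length x \<and> x ! i = i}"
  proof (rule set_eqI)
    fix i show "i \<in> {i. 1 \<le> i \<and> i \<le> length x \<and> sq x i = i - 1} \<longleftrightarrow> i \<in> Suc ` {i. i < length x \<and> x ! i = i}"
      by (cases i) (auto simp: sq_def)
  qed
  then show ?thesis unfolding amax_def by (simp add: card_image)
qed

lemma zero_eq: "zero x = length (filter (\<lambda>a. a = 0) x)"
proof -
  have "{i. 1 \<le> i \<and> i \<le> length x \<and> sq x i = 0} = Suc ` {i. i < length x \<and> x ! i = 0}"
  proof (rule set_eqI)
    fix i show "i \<in> {i. 1 \<le> i \<and> i \<le> length x \<and> sq x i = 0} \<longleftrightarrow> i \<in> Suc ` {i. i < length x \<and> x ! i = 0}"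
      by (cases i) (auto simp: sq_def)
  qed
  then show ?thesis unfolding zero_def by (simp add: card_image length_filter_conv_card)
qed

lemma R_exist: "j < length x \<Longrightarrow> \<exists>k. j \<le> k \<and> k < length x \<and> isR x k \<and> x ! k \<le> x ! j"
proof (induction "length x - j" arbitrary: j rule: less_induct)
  case less
  show ?case
  proof (cases "isR x j")
    case True then show ?thesis using less.prems by blast
  next
    case False
    then obtain l where l: "j < l" "l < length x" "x ! l \<le> x ! j" unfolding isR_def by (auto simp: not_less)
    then have "length x - l < length x - j" by simp
    then obtain k where "l \<le> k \<and> k < length x \<and> isR x k \<and> x ! k \<le> x ! l" using less.hyps l by blast
    then show ?thesis using l by (intro exI[of _ k]) auto
  qed
qed

context core0
begin

lemma take_s_le: "i \<le> P \<Longrightarrow> take i s = take i t"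
  using H1 by (simp add: s_def take_append)

lemma take_P_ne: "take P t \<noteq> []" using H1 qP by (cases t) auto

lemma last_take_P: "last (take P t) = t ! (P - 1)"
proof -
  have "last (take P t) = take P t ! (length (take P t) - 1)" using take_P_ne by (rule last_conv_nth)
  also have "\<dots> = t ! (P - 1)" using H1 qP by simp
  finally show ?thesis .
qed

lemma asc_take_s_SucP: "asc (take (Suc P) s) = asc (take P t)"
proof -
  have "take (Suc P) s = take P t @ [t ! q]" using H1 by (simp add: s_def take_append)
  then show ?thesis using asc_snoc[of "take P t" "t ! q"] last_take_P pm1 by simp
qed

lemma asc_take_s_gt:
  assumes "Suc P < i" "i \<le> length s"
  shows "asc (take i s) = asc (take (i - 1) t) + 1"
proof -
  define c where "c = take (i - Suc P) (drop P t)"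
  have ip: "i - P = Suc (i - Suc P)" using assms by simp
  have ts: "take i s = take P t @ t ! q # c" using H1 assms
    by (simp add: s_def take_append c_def ip)
  have e: "i - 1 = P + (i - Suc P)" using assms by simp
  have tt: "take (i - 1) t = take P t @ c" unfolding c_def e by (rule take_add)
  have cne: "c \<noteq> []" using assms H1 len_s by (simp add: c_def)
  have hdc: "hd c = t ! P" using cne H1 by (simp add: c_def hd_take hd_drop_conv_nth)
  show ?thesis unfolding ts tt
    by (rule ins_asc[OF take_P_ne cne]) (use hdc vw pm1 last_take_P in auto)
qed

lemma asc_s: "asc s = asc t + 1"
  using asc_take_s_gt[of "length s"] len_s H1 by simp

end

context ext
begin

lemma t_ne: "t \<noteq> []" using H0 unfolding is_ascent_def by simp

lemma y_ascent: "is_ascent y"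
  unfolding is_ascent_def
proof (intro conjI allI impI)
  show "y \<noteq> []" by (simp add: y_def)
  show "y ! 0 = 0" using H0 t_ne y_lt[of 0] unfolding is_ascent_def by simp
  fix i assume i: "0 < i \<and> i < length y"
  show "y ! i \<le> asc (take i y) + 1"
  proof (cases "i < length t")
    case True
    then have "take i y = take i t" by (simp add: y_def)
    then show ?thesis using H0 i True y_lt unfolding is_ascent_def by simp
  next
    case False
    then have "i = length t" using i len_y by simp
    then show ?thesis using y_last by (simp add: y_def)
  qed
qed

lemma last_t: "last t = t ! (length t - 1)" using t_ne by (rule last_conv_nth)

lemma asc_y: "asc y = asc t + 1"
  using asc_snoc[of t "asc t + 1"] t_ne last_t t_bound[of "length t - 1"] t_ne
  by (simp add: y_def)

lemma y_P1part: "sq y (length y - 1) < sq y (length y) \<and> sq y (length y) = asc y"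
proof -
  have "sq y (length y - 1) = t ! (length t - 1)" using t_ne len_y y_lt[of "length t - 1"]
    by (simp add: sq_def)
  moreover have "sq y (length y) = asc t + 1" using len_y y_last by (simp add: sq_def)
  ultimately show ?thesis using t_bound[of "length t - 1"] t_ne asc_y by simp
qed

lemma notin_t: "asc t + 1 \<notin> set t"
proof
  assume "asc t + 1 \<in> set t"
  then obtain i where "i < length t" "t ! i = asc t + 1" by (auto simp: in_set_conv_nth)
  then show False using t_bound[of i] by simp
qed

end

context core
begin

lemma j0: obtains j0 where "q < j0" "j0 < P" "t ! j0 = t ! P" using H5 by blast

lemma s_ascent: "is_ascent s"
  unfolding is_ascent_def
proof (intro conjI allI impI)
  show "s \<noteq> []" using len_s by auto
  show "s ! 0 = 0" using s_lt[of 0] H1 H0 unfolding is_ascent_def by simp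
  fix i assume i: "0 < i \<and> i < length s"
  show "s ! i \<le> asc (take i s) + 1"
  proof (cases "i < P")
    case True
    then show ?thesis using s_lt[of i] take_s_le[of i] H0 i H1 unfolding is_ascent_def by simp
  next
    case False
    show ?thesis
    proof (cases "i = P")
      case True
      then show ?thesis using s_P take_s_le[of P] ascent_prefix_bound[OF H0, of P q] H1 by simp
    next
      case False
      show ?thesis
      proof (cases "i = Suc P")
        case True
        have "t ! P \<le> asc (take P t) + 1" using H0 H1 qP unfolding is_ascent_def by simp
        then show ?thesis using True s_Suc[of P] asc_take_s_SucP by simp
      next
        case False
        then have gt: "Suc P < i" using \<open>\<not> i < P\<close> \<open>i \<noteq> P\<close> by simp
        have "t ! (i - 1) \<le> asc (take (i - 1) t) + 1" using H0 gt i len_s unfolding is_ascent_def by simp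
        then show ?thesis using s_gt[of i] gt asc_take_s_gt[of i] i by simp
      qed
    qed
  qed
qed

lemma s_Astar: "s \<in> Astar"
proof -
  have "s \<noteq> [0..<length s]"
  proof
    assume e: "s = [0..<length s]"
    have "s ! q = q" using arg_cong[OF e, of "\<lambda>l. l ! q"] nth_upt[of 0 q "length s"] H1 len_s
      by (simp del: upt_Suc)
    moreover have "s ! P = P" using arg_cong[OF e, of "\<lambda>l. l ! P"] nth_upt[of 0 P "length s"] H1 len_s
      by (simp del: upt_Suc)
    ultimately show False using s_P s_lt[of q] H1 by simp
  qed
  then show ?thesis using s_ascent by (simp add: Astar_def)
qed

lemma y_Astar: "y \<in> Astar"
proof -
  obtain j0 where j: "q < j0" "j0 < P" "t ! j0 = t ! P" by (rule j0)
  have "y \<noteq> [0..<length y]"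
  proof
    assume e: "y = [0..<length y]"
    have "y ! j0 = j0" using arg_cong[OF e, of "\<lambda>l. l ! j0"] nth_upt[of 0 j0 "length y"] j H1 len_y
      by (simp del: upt_Suc)
    moreover have "y ! P = P" using arg_cong[OF e, of "\<lambda>l. l ! P"] nth_upt[of 0 P "length y"] H1 len_y
      by (simp del: upt_Suc)
    ultimately show False using j y_lt H1 by simp
  qed
  then show ?thesis using y_ascent by (simp add: Astar_def)
qed

lemma noMasc: "Prm s (rpos s) < i \<Longrightarrow> i \<le> length s \<Longrightarrow> \<not> is_Masc s i"
proof -
  assume a: "Prm s (rpos s) < i" "i \<le> length s"
  then have k: "Suc P < i" using rpos_s Prm_s_r by simp
  define k where "k = i - 1"
  have ki: "i = Suc k" "Suc P \<le> k" "k < length s" using k a by (auto simp: k_def)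
  show ?thesis
  proof (cases "k = Suc P")
    case True
    obtain j0 where j: "q < j0" "j0 < P" "t ! j0 = t ! P" by (rule j0)
    have "t ! j0 \<le> asc (take P t)" using ascent_prefix_bound[OF H0, of P j0] j H1 by simp
    then show ?thesis using True ki s_Suc[of P] asc_take_s_SucP j
      unfolding is_Masc_def sq_def by simp
  next
    case False
    then have gt: "Suc P < k" using ki by simp
    have "t ! (k - 1) \<le> asc (take (k - 1) t) + 1" using H0 gt ki len_s unfolding is_ascent_def by simp
    then show ?thesis using s_gt[of k] gt asc_take_s_gt[of k] ki unfolding is_Masc_def sq_def by simp
  qed
qed

lemma Rmin_s_r: "Rmin s r = t ! q" using Rmin_RL[of r s] len_RL_s RL_s_r s_P by simp
lemma Rmin_s_r1: "Rmin s (Suc r) = t ! P" using Rmin_RL[of "Suc r" s] len_RL_s RL_s_r1 s_Suc[of P] by simp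

lemma sebr_s: "sebr s = Rmin s (rpos s + 1)"
proof -
  define Q where "Q = {j. 1 \<le> j \<and> j < Suc P \<and> sq s j = t ! q}"
  define E where "E = {sq s j |j. Suc q < j \<and> j < Suc P}"
  have sqs: "\<And>j. 1 \<le> j \<Longrightarrow> j < Suc P \<Longrightarrow> sq s j = t ! (j - 1)"
    using s_lt by (simp add: sq_def)
  have qQ: "Suc q \<in> Q" unfolding Q_def using H1 sqs[of "Suc q"] by simp
  have maxQ: "Max Q = Suc q"
  proof (rule Max_eqI)
    show "finite Q" unfolding Q_def by (rule finite_subset[of _ "{..P}"]) auto
    show "Suc q \<in> Q" by (rule qQ)
    fix j assume j: "j \<in> Q"
    show "j \<le> Suc q"
    proof (rule ccontr)
      assume "\<not> j \<le> Suc q"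
      then have "q < j - 1" "j - 1 < P" using j unfolding Q_def by auto
      then have "t ! P \<le> t ! (j - 1)" using H4 by simp
      moreover have "t ! (j - 1) = t ! q" using j sqs unfolding Q_def by auto
      ultimately show False using vw by simp
    qed
  qed
  obtain j0 where j: "q < j0" "j0 < P" "t ! j0 = t ! P" by (rule j0)
  have wE: "t ! P \<in> E" unfolding E_def using j sqs[of "Suc j0"]
    by (intro CollectI exI[of _ "Suc j0"]) simp
  have minE: "Min E = t ! P"
  proof (rule Min_eqI)
    show "finite E" unfolding E_def by (rule finite_image_set) simp
    show "t ! P \<in> E" by (rule wE)
    fix e assume "e \<in> E"
    then obtain j where "e = sq s j" "Suc q < j" "j < Suc P" unfolding E_def by blast
    then show "t ! P \<le> e" using sqs[of j] H4[of "j - 1"] by simp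
  qed
  have "sebr s = (if Q = {} then 0 else if E = {} then 0 else Min E)"
    unfolding sebr_def Let_def rpos_s Rmin_s_r Prm_s_r Q_def[symmetric] maxQ E_def ..
  also have "\<dots> = t ! P" using qQ wE minE by auto
  finally show ?thesis using Rmin_s_r1 rpos_s by simp
qed

lemma RL_t_short: "length (RL t) < length t"
proof -
  obtain j0 where j: "q < j0" "j0 < P" "t ! j0 = t ! P" by (rule j0)
  have "length (filter (isR t) [0..<length t]) < length [0..<length t]"
    using isR_t_mid[of j0] j H1 by (intro length_filter_less[of j0]) auto
  then show ?thesis unfolding RL_def by simp
qed

lemma s_T3: "s \<in> T3"
  unfolding T3_def
proof (intro CollectI conjI allI impI)
  show "s \<in> Astar" by (rule s_Astar)
  show "length s \<noteq> rmin s + 1" using RL_t_short len_s rmin_RL[of s] len_RL_s len_RL_t by simp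
  show "rpos s + 1 < rmin s" using rpos_s rmin_s by simp
  show "sebr s = Rmin s (rpos s + 1)" by (rule sebr_s)
  show "Prm s (rpos s + 1) = Prm s (rpos s) + 1" using rpos_s Prm_s_r Prm_s_r1 by simp
  fix i assume "Prm s (rpos s) < i \<and> i \<le> length s"
  then show "\<not> is_Masc s i" using noMasc by simp
qed

lemma y_target: "y \<in> {x \<in> Aseq (length s) \<inter> P1. rpos x \<noteq> 0}"
  using y_Astar y_ascent y_P1part rpos_y len_y len_s by (simp add: Aseq_def P1_def)

lemma s_Aseq: "s \<in> Aseq (length s)" using s_ascent by (simp add: Aseq_def)

end


context core
begin

lemma stat_asc: "asc s = asc y" using asc_s asc_y by simp

lemma set_s: "set s = set t"
proof -
  have "set s = insert (t ! q) (set (take P t @ drop P t))" unfolding s_def set_append by auto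
  also have "\<dots> = set t" using H1 by (simp only: append_take_drop_id) (simp add: insert_absorb)
  finally show ?thesis .
qed

lemma stat_rep: "rep s = rep y + 1"
proof -
  have c: "card (set t) \<le> length t" by (rule card_length)
  have "set y = insert (asc t + 1) (set t)" by (simp add: y_def)
  then have "card (set y) = Suc (card (set t))" using notin_t by simp
  then show ?thesis unfolding rep_def using set_s len_s len_y c by simp
qed

lemma fix_s: "{i. i < length s \<and> s ! i = i} = {i. i < P \<and> t ! i = i}"
proof (rule set_eqI, rule iffI)
  fix i assume i: "i \<in> {i. i < length s \<and> s ! i = i}"
  have "i < P"
  proof (rule ccontr)
    assume "\<not> i < P"
    then have "s ! (P - 1) < s ! Suc (P - 1)" using ascent_fixpoint[OF s_ascent, of i "P - 1"] i qP by simp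
    then show False using s_lt[of "P - 1"] s_P pm1 qP by simp
  qed
  then show "i \<in> {i. i < P \<and> t ! i = i}" using i s_lt by simp
next
  fix i assume "i \<in> {i. i < P \<and> t ! i = i}"
  then show "i \<in> {i. i < length s \<and> s ! i = i}" using s_lt len_s H1 by simp
qed

lemma fix_y: "{i. i < length y \<and> y ! i = i} = {i. i < P \<and> t ! i = i}"
proof (rule set_eqI, rule iffI)
  fix i assume i: "i \<in> {i. i < length y \<and> y ! i = i}"
  have "i < P"
  proof (rule ccontr)
    assume "\<not> i < P"
    then have "y ! (P - 1) < y ! Suc (P - 1)" using ascent_fixpoint[OF y_ascent, of i "P - 1"] i qP by simp
    then show False using y_lt[of "P - 1"] y_lt[of P] pm1 qP H1 by simp
  qed
  then show "i \<in> {i. i < P \<and> t ! i = i}" using i y_lt H1 by simp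
next
  fix i assume "i \<in> {i. i < P \<and> t ! i = i}"
  then show "i \<in> {i. i < length y \<and> y ! i = i}" using y_lt len_y H1 by simp
qed

lemma stat_amax: "amax s = amax y" unfolding amax_eq fix_s fix_y ..

lemma stat_rmin: "int (rmin s) = int (rmin y) - 1" using rmin_y by simp
lemma stat_rpos: "int (rpos s) = int (rpos y) - 1" using rpos_y rpos_s by simp

lemma v0: "t ! q = 0 \<longleftrightarrow> r = 0"
proof
  assume v: "t ! q = 0"
  show "r = 0"
  proof (rule ccontr)
    assume "r \<noteq> 0"
    then have "A \<noteq> []" by (simp add: r_def)
    then obtain a where "a \<in> set A" by (cases A) auto
    then have "a < q" "isR t a" by (auto simp: A_def)
    then have "t ! a < t ! q" using H1 unfolding isR_def by simp
    then show False using v by simp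
  qed
next
  assume "r = 0"
  then have A0: "\<And>k. k < q \<Longrightarrow> \<not> isR t k" by (auto simp: r_def A_def filter_empty_conv)
  obtain k where k: "k < length t" "isR t k" "t ! k \<le> t ! 0" using R_exist[of 0 t] H1 by force
  have t0: "t ! 0 = 0" using H0 unfolding is_ascent_def by simp
  show "t ! q = 0"
  proof (cases "k < q")
    case True then show ?thesis using A0 k by simp
  next
    case False
    show ?thesis
    proof (cases "k = q")
      case True then show ?thesis using k t0 by simp
    next
      case False
      then have "q < k" using \<open>\<not> k < q\<close> by simp
      then have "t ! q < t ! k" using H2 k unfolding isR_def by simp
      then show ?thesis using k t0 by simp
    qed
  qed
qed

lemma stat_zero: "int (zero s) = int (zero y) + chi (rpos s = 0)"
proof -
  let ?p = "\<lambda>a::nat. a = 0"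
  have "length (filter ?p t) = length (filter ?p (take P t)) + length (filter ?p (drop P t))"
    by (metis append_take_drop_id filter_append length_append)
  moreover have "length (filter ?p s) = length (filter ?p (take P t)) + (if t ! q = 0 then 1 else 0) + length (filter ?p (drop P t))"
    by (simp add: s_def)
  moreover have "length (filter ?p y) = length (filter ?p t)" by (simp add: y_def)
  ultimately show ?thesis unfolding zero_eq chi_def using v0 rpos_s by simp
qed

lemma stat_ealm: "int (ealm s) = int (ealm y) - chi (Prm s (rpos s) = amax s + 1)"
proof -
  define F where "F = {i. i < P \<and> t ! i = i}"
  have as: "amax s = card F" unfolding amax_eq fix_s F_def ..
  have ay: "amax y = card F" unfolding amax_eq fix_y F_def ..
  have sub: "F \<subseteq> {..<P}" unfolding F_def by auto
  then have cP: "card F \<le> P" using card_mono[of "{..<P}" F] by simp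
  have es: "ealm s = s ! card F" unfolding ealm_def as using cP H1 len_s by (simp add: sq_def)
  have ey: "ealm y = y ! card F" unfolding ealm_def ay using cP H1 len_y by (simp add: sq_def)
  show ?thesis
  proof (cases "card F < P")
    case True
    then show ?thesis using es ey s_lt y_lt H1 as rpos_s Prm_s_r by (simp add: chi_def)
  next
    case False
    then have cF: "card F = P" using cP by simp
    then have "F = {..<P}" using sub by (intro card_subset_eq) auto
    then have fx: "\<And>i. i < P \<Longrightarrow> t ! i = i" unfolding F_def by auto
    have "t ! P \<le> t ! Suc q" using H4[of "Suc q"] qP by simp
    then have "t ! P = Suc q" using vw fx[of q] fx[of "Suc q"] H1 qP by simp
    then show ?thesis using es ey cF s_P y_lt[of P] H1 fx[of q] as rpos_s Prm_s_r by (simp add: chi_def)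
  qed
qed

end


definition fmap :: "nat list \<Rightarrow> nat list" where
  "fmap x = (let P = Prm x (rpos x) - 1; t = take P x @ drop (Suc P) x in t @ [asc t + 1])"

definition gmap :: "nat list \<Rightarrow> nat list" where
  "gmap x = (let t = butlast x; q = Prm x (rpos x - 1) - 1; P = Prm x (rpos x) - 1
             in take P t @ t ! q # drop P t)"

context core
begin

lemma fmap_s: "fmap s = y"
proof -
  have "take P s = take P t" by (rule take_s_le) simp
  moreover have "drop (Suc P) s = drop P t" using H1 by (simp add: s_def)
  ultimately show ?thesis unfolding fmap_def Let_def rpos_s Prm_s_r by (simp add: y_def)
qed

lemma gmap_y: "gmap y = s"
proof -
  have "butlast y = t" by (simp add: y_def)
  then show ?thesis unfolding gmap_def Let_def rpos_y Prm_y_r1 using Prm_y_r by (simp add: s_def)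
qed

end

lemma asc_step: "is_ascent x \<Longrightarrow> 0 < i \<Longrightarrow> i < length x \<Longrightarrow> x ! i \<le> asc (take i x) + 1"
  unfolding is_ascent_def by blast

lemma f_dir:
  assumes T: "s0 \<in> T3"
  shows "\<exists>t q P. core t q P \<and> s0 = core0.s t q P"
proof -
  define r0 where "r0 = rpos s0"
  have asc0: "is_ascent s0" using T by (simp add: T3_def Astar_def)
  have r0L: "Suc r0 < length (RL s0)" using T by (simp add: T3_def r0_def rmin_RL)
  define P where "P = RL s0 ! r0"
  have PrmEq: "Prm s0 (Suc r0) = Prm s0 r0 + 1" using T by (simp add: T3_def r0_def)
  have L1: "RL s0 ! Suc r0 = Suc P" using PrmEq Prm_RL[of r0 s0] Prm_RL[of "Suc r0" s0] r0L by (simp add: P_def)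
  have RP: "isR s0 P" "P < length s0" using RL_nth[of r0 s0] r0L by (auto simp: P_def)
  have RP1: "isR s0 (Suc P)" "Suc P < length s0" using RL_nth[of "Suc r0" s0] r0L L1 by auto
  define v where "v = s0 ! P"
  define w where "w = s0 ! Suc P"
  have vw: "v < w" using RP RP1 unfolding isR_def v_def w_def by simp
  have Rm0: "Rmin s0 r0 = v" using Rmin_RL[of r0 s0] r0L by (simp add: P_def v_def)
  have Rm1: "Rmin s0 (Suc r0) = w" using Rmin_RL[of "Suc r0" s0] r0L L1 by (simp add: w_def)
  have Pm0: "Prm s0 r0 = Suc P" using Prm_RL[of r0 s0] r0L by (simp add: P_def)
  define Q where "Q = {j. 1 \<le> j \<and> j < Suc P \<and> sq s0 j = v}"
  define E where "E = {sq s0 j |j. Max Q < j \<and> j < Suc P}"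
  have sebr0: "sebr s0 = (if Q = {} then 0 else if E = {} then 0 else Min E)"
    unfolding sebr_def Let_def r0_def[symmetric] Rm0 Pm0 Q_def[symmetric] E_def ..
  have sebrw: "sebr s0 = w" using T Rm1 by (simp add: T3_def r0_def)
  have Qne: "Q \<noteq> {}" using sebr0 sebrw vw by (cases "Q = {}") auto
  have Ene: "E \<noteq> {}" using sebr0 sebrw vw Qne by (cases "E = {}") auto
  have minE: "Min E = w" using sebr0 sebrw Qne Ene by simp
  have finQ: "finite Q" unfolding Q_def by (rule finite_subset[of _ "{..P}"]) auto
  have q1Q: "Max Q \<in> Q" by (rule Max_in[OF finQ Qne])
  define q where "q = Max Q - 1"
  have q1: "Max Q = Suc q" "q < P" "s0 ! q = v" using q1Q unfolding Q_def q_def by (auto simp: sq_def)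
  have finE: "finite E" unfolding E_def by (rule finite_image_set) simp
  have midge: "\<And>k. q < k \<Longrightarrow> k < P \<Longrightarrow> w \<le> s0 ! k"
  proof -
    fix k assume k: "q < k" "k < P"
    have "Max Q < Suc k \<and> Suc k < Suc P" using k q1 by simp
    then have "sq s0 (Suc k) \<in> E" unfolding E_def by blast
    then have "Min E \<le> sq s0 (Suc k)" by (rule Min_le[OF finE])
    then show "w \<le> s0 ! k" using minE by (simp add: sq_def)
  qed
  obtain k0 where k0: "q < k0" "k0 < P" "s0 ! k0 = w"
  proof -
    have "Min E \<in> E" by (rule Min_in[OF finE Ene])
    then obtain j where "Min E = sq s0 j" "Max Q < j" "j < Suc P" unfolding E_def by blast
    then show ?thesis using that[of "j - 1"] q1 minE by (auto simp: sq_def)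
  qed
  define t where "t = take P s0 @ drop (Suc P) s0"
  have lt: "length t = length s0 - 1" using RP1 by (simp add: t_def)
  have t_lt: "\<And>i. i < P \<Longrightarrow> t ! i = s0 ! i" using RP by (simp add: t_def nth_append)
  have t_ge: "\<And>i. P \<le> i \<Longrightarrow> i < length t \<Longrightarrow> t ! i = s0 ! Suc i"
    using RP lt by (simp add: t_def nth_append)
  have c0: "core0 t q P"
  proof
    show "q < P" by (rule q1(2))
    show "P < length t" using lt RP1 by simp
    show "isR t q" unfolding isR_def
    proof (intro allI impI)
      fix j assume j: "q < j \<and> j < length t"
      show "t ! q < t ! j"
      proof (cases "j < P")
        case True then show ?thesis using t_lt q1 midge[of j] j vw by simp
      next
        case False
        have "P < Suc j \<and> Suc j < length s0" using j lt False by linarith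
        then have "s0 ! P < s0 ! Suc j" using RP unfolding isR_def by blast
        then show ?thesis using t_lt q1 t_ge[of j] j False v_def by simp
      qed
    qed
    show "isR t P" unfolding isR_def
    proof (intro allI impI)
      fix j assume j: "P < j \<and> j < length t"
      then have "Suc P < Suc j \<and> Suc j < length s0" using lt by linarith
      then have "s0 ! Suc P < s0 ! Suc j" using RP1 unfolding isR_def by blast
      then show "t ! P < t ! j" using t_ge[of P] t_ge[of j] j by simp
    qed
    fix j assume "q < j" "j < P"
    then show "t ! P \<le> t ! j" using t_ge[of P] t_lt midge lt RP1 w_def by simp
  next
    show "\<exists>j. q < j \<and> j < P \<and> t ! j = t ! P" using k0 t_lt t_ge[of P] lt RP1 w_def by auto
  qed
  interpret c0: core0 t q P by (rule c0)
  have s0eq: "s0 = c0.s"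
  proof -
    have "take P t = take P s0" using RP by (simp add: t_def)
    moreover have "drop P t = drop (Suc P) s0" using RP by (simp add: t_def)
    moreover have "t ! q = s0 ! P" using t_lt q1 v_def by simp
    ultimately have "c0.s = take P s0 @ s0 ! P # drop (Suc P) s0" by (simp add: c0.s_def)
    then show ?thesis using id_take_nth_drop[OF RP(2)] by simp
  qed
  have H0: "is_ascent t"
    unfolding is_ascent_def
  proof (intro conjI allI impI)
    show "t \<noteq> []" using lt RP1 by auto
    show "t ! 0 = 0" using t_lt[of 0] q1 asc0 unfolding is_ascent_def by simp
    fix i assume i: "0 < i \<and> i < length t"
    have il: "i < length s0" "Suc i < length s0" using i lt by linarith+
    show "t ! i \<le> asc (take i t) + 1"
    proof (cases "i < P")
      case True
      have "take i t = take i s0" using c0.take_s_le[of i] True s0eq by simp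
      moreover have "s0 ! i \<le> asc (take i s0) + 1" using asc_step[OF asc0, of i] i il by simp
      ultimately show ?thesis using t_lt[OF True] by simp
    next
      case False
      have ti: "t ! i = s0 ! Suc i" using t_ge False i by simp
      have le1: "s0 ! Suc i \<le> asc (take (Suc i) s0) + 1" using asc_step[OF asc0, of "Suc i"] il by simp
      have nm: "\<forall>i. Prm s0 r0 < i \<and> i \<le> length s0 \<longrightarrow> \<not> is_Masc s0 i"
        using T unfolding T3_def r0_def by blast
      have "Suc P < Suc (Suc i) \<and> Suc (Suc i) \<le> length s0" using False il by simp
      then have "\<not> is_Masc s0 (Suc (Suc i))" using nm Pm0 by simp
      then have le: "s0 ! Suc i \<le> asc (take (Suc i) s0)" using le1 unfolding is_Masc_def sq_def by simp
      show ?thesis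
      proof (cases "i = P")
        case True
        then show ?thesis using le ti c0.asc_take_s_SucP s0eq by simp
      next
        case False
        then have "Suc P < Suc i" using \<open>\<not> i < P\<close> by simp
        then have "asc (take (Suc i) s0) = asc (take i t) + 1"
          using c0.asc_take_s_gt[of "Suc i"] s0eq i c0.len_s by simp
        then show ?thesis using le ti by simp
      qed
    qed
  qed
  have rr: "c0.r = r0"
  proof -
    have "RL s0 ! c0.r = P" using c0.RL_s_r s0eq by simp
    moreover have "RL s0 ! r0 = P" by (simp add: P_def)
    ultimately have "RL s0 ! c0.r = RL s0 ! r0" by simp
    moreover have "c0.r < length (RL s0)" using c0.len_RL_s s0eq by simp
    ultimately show ?thesis using r0L nth_eq_iff_index_eq[OF RL_distinct[of s0], of "c0.r" r0] by simp
  qed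
  have H6: "\<And>b. isR t b \<Longrightarrow> P < b \<Longrightarrow> b < length t \<Longrightarrow> \<not> DD t b"
  proof -
    fix b assume b: "isR t b" "P < b" "b < length t"
    then have "b \<in> set c0.B'" using c0.set_B' by simp
    then obtain i where i: "i < length c0.B'" "c0.B' ! i = b" by (auto simp: in_set_conv_nth)
    define m where "m = Suc (Suc c0.r) + i"
    have mL: "m < length (RL s0)" using c0.len_RL_s s0eq i by (simp add: m_def)
    have "RL s0 ! m = Suc b" using c0.RL_s_gt[of m] s0eq mL i by (simp add: m_def)
    moreover have "rmin s0 \<noteq> length s0" using c0.not_all_R_s s0eq by simp
    ultimately have "\<not> DD s0 (Suc b)" using rpos_above[of s0 m] mL rr by (simp add: m_def r0_def)
    then show "\<not> DD t b" using c0.DD_s_gt b s0eq by simp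
  qed
  have "core t q P" unfolding core_def core_axioms_def ext_def using c0 H0 H6 by blast
  then show ?thesis using s0eq by blast
qed

lemma g_dir:
  assumes Y: "y0 \<in> {x \<in> Aseq n \<inter> P1. rpos x \<noteq> 0}"
  shows "\<exists>t q P. core t q P \<and> y0 = ext.y t \<and> gmap y0 = core0.s t q P"
proof -
  have asc0: "is_ascent y0" and len: "length y0 = n" and P1a: "sq y0 (n - 1) < sq y0 n"
    and P1b: "sq y0 n = asc y0" and rp: "rpos y0 \<noteq> 0"
    using Y by (auto simp: Aseq_def P1_def Astar_def)
  have n0: "n \<noteq> 0" using asc0 len unfolding is_ascent_def by auto
  have n2: "2 \<le> n"
  proof (rule ccontr)
    assume "\<not> 2 \<le> n"
    then have "n = 1" using n0 by simp
    then show False using P1a by (simp add: sq_def)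
  qed
  define t where "t = butlast y0"
  have lt: "length t = n - 1" using len by (simp add: t_def)
  have tne: "t \<noteq> []" using lt n2 by auto
  have y0ne: "y0 \<noteq> []" using n0 len by auto
  have y0eq1: "y0 = t @ [y0 ! (n - 1)]"
    using append_butlast_last_id[OF y0ne] last_conv_nth[OF y0ne] len by (simp add: t_def)
  have lastt: "last t = y0 ! (n - 2)"
  proof -
    have "last t = t ! (length t - 1)" by (rule last_conv_nth[OF tne])
    also have "\<dots> = y0 ! (n - 2)" using lt n2 unfolding t_def by (simp add: nth_butlast numeral_2_eq_2)
    finally show ?thesis .
  qed
  have s1: "sq y0 (n - 1) = y0 ! (n - 2)" using n2 by (simp add: sq_def numeral_2_eq_2)
  have s2: "sq y0 n = y0 ! (n - 1)" by (simp add: sq_def)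
  have "asc y0 = asc t + 1"
    using asc_snoc[of t "y0 ! (n - 1)"] y0eq1 tne lastt P1a s1 s2 by simp
  then have y0eq: "y0 = t @ [asc t + 1]" using y0eq1 P1b s2 by simp
  have H0: "is_ascent t"
  proof -
    have "t = take (n - 1) y0" using len by (simp add: t_def butlast_conv_take)
    then show ?thesis using is_ascent_take[OF asc0, of "n - 1"] n2 len by simp
  qed
  interpret e: ext t by (rule ext.intro[OF H0])
  have ye: "e.y = y0" using y0eq by (simp add: e.y_def)
  define \<rho> where "\<rho> = rpos y0"
  have rm: "rmin y0 \<noteq> length y0" "\<rho> < length (RL y0)" "DD y0 (RL y0 ! \<rho>)"
    using rpos_mem[OF rp] by (auto simp: \<rho>_def)
  have RLy: "RL y0 = RL t @ [length t]" using e.RL_y ye by simp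
  have \<rho>L: "\<rho> < length (RL t)"
  proof (rule ccontr)
    assume "\<not> \<rho> < length (RL t)"
    then have "\<rho> = length (RL t)" using rm RLy by simp
    then have "RL y0 ! \<rho> = length t" using RLy by simp
    then show False using rm e.DD_y_last ye by simp
  qed
  have \<rho>1: "0 < \<rho>" using rp by (simp add: \<rho>_def)
  define q where "q = RL t ! (\<rho> - 1)"
  define P where "P = RL t ! \<rho>"
  have Ry1: "RL y0 ! (\<rho> - 1) = q"
  proof -
    have "\<rho> - 1 < length (RL t)" using \<rho>L by simp
    then show ?thesis using RLy by (simp add: q_def nth_append)
  qed
  have Ry2: "RL y0 ! \<rho> = P" using RLy \<rho>L by (simp add: P_def nth_append)
  have qP: "q < P" using RL_less_iff[of "\<rho> - 1" t \<rho>] \<rho>L \<rho>1 by (simp add: q_def P_def)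
  have RP: "P < length t" "isR t P" using RL_nth[OF \<rho>L] by (auto simp: P_def)
  have Rq: "isR t q" using RL_nth[of "\<rho> - 1" t] \<rho>L by (simp add: q_def)
  have H4: "\<And>j. q < j \<Longrightarrow> j < P \<Longrightarrow> t ! P \<le> t ! j"
  proof (rule ccontr)
    fix j assume j: "q < j" "j < P" and nle: "\<not> t ! P \<le> t ! j"
    obtain k where k: "j \<le> k" "k < length t" "isR t k" "t ! k \<le> t ! j"
      using R_exist[of j t] j RP by auto
    have "k < P"
    proof (rule ccontr)
      assume "\<not> k < P"
      then have "k = P \<or> P < k" by auto
      then show False
      proof
        assume "k = P" then show False using k nle by simp
      next
        assume "P < k" then have "t ! P < t ! k" using RP k unfolding isR_def by simp
        then show False using k nle by simp
      qed
    qed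
    then have "k \<le> RL t ! (\<rho> - 1)" using RL_between[OF \<rho>L, of k] k by (simp add: P_def)
    then show False using k j by (simp add: q_def)
  qed
  have H5: "\<exists>j. q < j \<and> j < P \<and> t ! j = t ! P"
  proof -
    have "DD t P" using rm Ry2 e.DD_y_lt[of P] RP ye by simp
    then obtain j where j: "j < P" "t ! j = t ! P" "\<forall>k. j \<le> k \<and> k < P \<longrightarrow> \<not> isR t k"
      unfolding DD_def by blast
    have "q < j"
    proof (rule ccontr)
      assume "\<not> q < j"
      then have "j \<le> q \<and> q < P" using qP by simp
      then show False using j(3) Rq by blast
    qed
    then show ?thesis using j by blast
  qed
  have c0: "core0 t q P" unfolding core0_def using qP RP Rq H4 H5 by blast
  have H6: "\<And>b. isR t b \<Longrightarrow> P < b \<Longrightarrow> b < length t \<Longrightarrow> \<not> DD t b"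
  proof -
    fix b assume b: "isR t b" "P < b" "b < length t"
    obtain m where m: "m < length (RL t)" "RL t ! m = b" using RL_memE[OF b(1) b(3)] by blast
    have "\<rho> < m" using RL_less_iff[OF \<rho>L m(1)] m b by (simp add: P_def)
    moreover have "m < length (RL y0)" using m RLy by simp
    moreover have "RL y0 ! m = b" using m RLy by (simp add: nth_append)
    ultimately have "\<not> DD y0 b" using rpos_above[OF rm(1), of m] by (simp add: \<rho>_def)
    then show "\<not> DD t b" using e.DD_y_lt[of b] b ye by simp
  qed
  have c: "core t q P" unfolding core_def core_axioms_def ext_def using c0 H0 H6 by blast
  have "gmap y0 = core0.s t q P"
  proof -
    have "butlast y0 = t" by (simp add: t_def)
    moreover have "Prm y0 (rpos y0 - 1) - 1 = q" using Prm_RL[of "\<rho> - 1" y0] rm Ry1 by (simp add: \<rho>_def)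
    moreover have "Prm y0 (rpos y0) - 1 = P" using Prm_RL[of \<rho> y0] rm Ry2 by (simp add: \<rho>_def)
    ultimately show ?thesis unfolding gmap_def Let_def core0.s_def[OF c0] by simp
  qed
  then show ?thesis using c ye by blast
qed

theorem mainTheorem11:
  fixes n :: nat
  shows "\<exists>f3. bij_betw f3 (T3 \<inter> Aseq n) {s \<in> Aseq n \<inter> P1. rpos s \<noteq> 0} \<and>
    (\<forall>s \<in> T3 \<inter> Aseq n.
       asc s = asc (f3 s) \<and>
       rep s = rep (f3 s) + 1 \<and>
       amax s = amax (f3 s) \<and>
       int (rmin s) = int (rmin (f3 s)) - 1 \<and>
       int (rpos s) = int (rpos (f3 s)) - 1 \<and>
       int (zero s) = int (zero (f3 s)) + chi (rpos s = 0) \<and>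
       int (ealm s) = int (ealm (f3 s)) - chi (Prm s (rpos s) = amax s + 1))"
proof -
  let ?A = "T3 \<inter> Aseq n"
  let ?B = "{s \<in> Aseq n \<inter> P1. rpos s \<noteq> 0}"
  have fA: "fmap s0 \<in> ?B \<and> gmap (fmap s0) = s0 \<and>
       asc s0 = asc (fmap s0) \<and>
       rep s0 = rep (fmap s0) + 1 \<and>
       amax s0 = amax (fmap s0) \<and>
       int (rmin s0) = int (rmin (fmap s0)) - 1 \<and>
       int (rpos s0) = int (rpos (fmap s0)) - 1 \<and>
       int (zero s0) = int (zero (fmap s0)) + chi (rpos s0 = 0) \<and>
       int (ealm s0) = int (ealm (fmap s0)) - chi (Prm s0 (rpos s0) = amax s0 + 1)"
    if s0: "s0 \<in> ?A" for s0
  proof -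
    obtain t q P where c: "core t q P" and e: "s0 = core0.s t q P" using f_dir s0 by blast
    interpret c: core t q P by (rule c)
    have ln: "length c.s = n" using s0 e by (simp add: Aseq_def)
    have "c.y \<in> ?B" using c.y_target ln by simp
    then show ?thesis
      using c.fmap_s c.gmap_y c.stat_asc c.stat_rep c.stat_amax c.stat_rmin c.stat_rpos
        c.stat_zero c.stat_ealm e by simp
  qed
  have gB: "gmap y0 \<in> ?A \<and> fmap (gmap y0) = y0" if y0: "y0 \<in> ?B" for y0
  proof -
    obtain t q P where c: "core t q P" and e: "y0 = ext.y t" and g: "gmap y0 = core0.s t q P"
      using g_dir[OF y0] by blast
    interpret c: core t q P by (rule c)
    have ln: "length c.s = n" using y0 e c.len_s c.len_y by (simp add: Aseq_def)
    have "c.s \<in> ?A" using c.s_T3 c.s_Aseq ln by simp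
    then show ?thesis using g c.fmap_s e by simp
  qed
  have "bij_betw fmap ?A ?B"
    by (rule bij_betw_byWitness[where f' = gmap]) (use fA gB in blast)+
  then show ?thesis using fA by blast
qed

end
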